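(* Let $R$ be a commutative ring and $\mathfrak{a}\subseteq R$ an ideal. (a) If some power $\mathfrak{a}^n$ ($n\geq1$) is finitely generated, or if $\mathfrak{a}$ is generated by idempotents, then $\Gamma_\mathfrak{a}=\overline{\Gamma}_\mathfrak{a}$. (b) If $R$ is noetherian or absolutely flat (von Neumann regular), then $\Gamma_\mathfrak{a}=\overline{\Gamma}_\mathfrak{a}$. (c) If $\mathfrak{b}\subseteq R$ is an ideal with $\mathfrak{a}\subseteq\mathfrak{b}\subseteq\sqrt{\mathfrak{a}}$ and $\Gamma_\mathfrak{b}=\overline{\Gamma}_\mathfrak{b}$, then $\Gamma_\mathfrak{a}=\overline{\Gamma}_\mathfrak{a}$. (d) If $M$ is a noetherian $R$-module, then $\Gamma_\mathfrak{a}(M)=\overline{\Gamma}_\mathfrak{a}(M)$.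
   Context: For an $R$-module $M$: $\Gamma_\mathfrak{a}(M)=\{x\in M\mid \exists n\in\mathbb{N}:\mathfrak{a}^n\subseteq(0:_Rx)\}$ and $\overline{\Gamma}_\mathfrak{a}(M)=\{x\in M\mid \mathfrak{a}\subseteq\sqrt{(0:_Rx)}\}$; $\Gamma_\mathfrak{a}=\overline{\Gamma}_\mathfrak{a}$ means equality for every $R$-module $M$. *)

theory Defs
  imports "HOL-Algebra.Algebra"
begin

definition ideal_power :: "('a, 'b) ring_scheme \<Rightarrow> 'a set \<Rightarrow> nat \<Rightarrow> 'a set" where
  "ideal_power R I n = I [^]\<^bsub>ideals_set R\<^esub> n"

definition radical :: "('a, 'b) ring_scheme \<Rightarrow> 'a set \<Rightarrow> 'a set" where
  "radical R I = {r \<in> carrier R. \<exists>n::nat. r [^]\<^bsub>R\<^esub> n \<in> I}"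

definition annihilator :: "('a, 'b) ring_scheme \<Rightarrow> ('a, 'm, 'd) module_scheme \<Rightarrow> 'm \<Rightarrow> 'a set" where
  "annihilator R M x = {r \<in> carrier R. r \<odot>\<^bsub>M\<^esub> x = \<zero>\<^bsub>M\<^esub>}"

definition Gamma :: "('a, 'b) ring_scheme \<Rightarrow> 'a set \<Rightarrow> ('a, 'm, 'd) module_scheme \<Rightarrow> 'm set" where
  "Gamma R I M = {x \<in> carrier M. \<exists>n::nat. ideal_power R I n \<subseteq> annihilator R M x}"

definition Gamma_bar :: "('a, 'b) ring_scheme \<Rightarrow> 'a set \<Rightarrow> ('a, 'm, 'd) module_scheme \<Rightarrow> 'm set" where
  "Gamma_bar R I M = {x \<in> carrier M. I \<subseteq> radical R (annihilator R M x)}"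

definition finitely_generated_ideal :: "('a, 'b) ring_scheme \<Rightarrow> 'a set \<Rightarrow> bool" where
  "finitely_generated_ideal R I \<longleftrightarrow> (\<exists>S. S \<subseteq> carrier R \<and> finite S \<and> I = Idl\<^bsub>R\<^esub> S)"

definition generated_by_idempotents :: "('a, 'b) ring_scheme \<Rightarrow> 'a set \<Rightarrow> bool" where
  "generated_by_idempotents R I \<longleftrightarrow>
     (\<exists>E. E \<subseteq> carrier R \<and> (\<forall>e\<in>E. e \<otimes>\<^bsub>R\<^esub> e = e) \<and> I = Idl\<^bsub>R\<^esub> E)"

text \<open>Absolutely flat = von Neumann regular (for commutative rings).\<close>
definition von_neumann_regular :: "('a, 'b) ring_scheme \<Rightarrow> bool" where
  "von_neumann_regular R \<longleftrightarrow> (\<forall>x\<in>carrier R. \<exists>y\<in>carrier R. x = x \<otimes>\<^bsub>R\<^esub> x \<otimes>\<^bsub>R\<^esub> y)"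

definition gen_submodule :: "('a, 'b) ring_scheme \<Rightarrow> ('a, 'm, 'd) module_scheme \<Rightarrow> 'm set \<Rightarrow> 'm set" where
  "gen_submodule R M S = \<Inter>{N. submodule N R M \<and> S \<subseteq> N}"

definition noetherian_module :: "('a, 'b) ring_scheme \<Rightarrow> ('a, 'm, 'd) module_scheme \<Rightarrow> bool" where
  "noetherian_module R M \<longleftrightarrow> module R M \<and>
     (\<forall>N. submodule N R M \<longrightarrow> (\<exists>S. S \<subseteq> carrier M \<and> finite S \<and> N = gen_submodule R M S))"

end

theory Submission imports Defs begin

context cring begin

lemma ip0: "ideal_power R I 0 = carrier R"
  by (simp add: ideal_power_def ideals_set_def)

lemma ipSuc: "ideal_power R I (Suc n) = ideal_prod R (ideal_power R I n) I"
  by (simp add: ideal_power_def ideals_set_def)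

lemma ip_ideal: "ideal I R \<Longrightarrow> ideal (ideal_power R I n) R"
  by (induct n) (simp_all add: ip0 ipSuc oneideal ideal_prod_is_ideal)

lemma ip_mem: "ideal I R \<Longrightarrow> r \<in> I \<Longrightarrow> r [^] n \<in> ideal_power R I n"
  by (induct n) (simp_all add: ip0 ipSuc ideal_prod.prod ideal.Icarr)

lemma iprod_mono: "I \<subseteq> I' \<Longrightarrow> J \<subseteq> J' \<Longrightarrow> ideal_prod R I J \<subseteq> ideal_prod R I' J'"
proof
  fix s assume h: "I \<subseteq> I'" "J \<subseteq> J'" and s: "s \<in> ideal_prod R I J"
  from s show "s \<in> ideal_prod R I' J'"
    by (induct s rule: ideal_prod.induct) (use h in \<open>auto intro: ideal_prod.intros\<close>)
qed

lemma ip_mono: "I \<subseteq> J \<Longrightarrow> ideal_power R I n \<subseteq> ideal_power R J n"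
  by (induct n) (simp_all add: ip0 ipSuc iprod_mono)

lemma ip_pow: "ideal I R \<Longrightarrow> ideal_power R (ideal_power R I m) n = ideal_power R I (m*n)"
  unfolding ideal_power_def
  using monoid.nat_pow_pow[OF comm_monoid.axioms(1)[OF ideals_set_is_comm_monoid], of I m n]
  by (simp add: ideals_set_def)

lemma ip_add: "ideal I R \<Longrightarrow> ideal_power R I (m+n) = ideal_prod R (ideal_power R I m) (ideal_power R I n)"
  unfolding ideal_power_def
  using monoid.nat_pow_mult[OF comm_monoid.axioms(1)[OF ideals_set_is_comm_monoid], of I m n]
  by (simp add: ideals_set_def)

lemma ip_anti: "ideal I R \<Longrightarrow> m \<le> n \<Longrightarrow> ideal_power R I n \<subseteq> ideal_power R I m"
proof -
  assume a: "ideal I R" "m \<le> n"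
  have "ideal_power R I n = ideal_prod R (ideal_power R I m) (ideal_power R I (n-m))"
    using ip_add[OF a(1), of m "n-m"] a(2) by simp
  then show ?thesis using ideal_prod_inter[OF ip_ideal[OF a(1)] ip_ideal[OF a(1)], of m "n-m"] by auto
qed

lemma ip_one: "ideal I R \<Longrightarrow> ideal_power R I 1 = I"
  using ipSuc[of I 0] ip0 ideal_prod_commute[OF oneideal, of I] ideal_prod_one by simp

lemma one_prod: "ideal I R \<Longrightarrow> ideal_prod R (carrier R) I = I"
  using ideal_prod_commute[OF oneideal, of I] ideal_prod_one by simp

lemma set_add_sub: "ideal A R \<Longrightarrow> B \<subseteq> A \<Longrightarrow> C \<subseteq> A \<Longrightarrow> B <+> C \<subseteq> A"
  unfolding set_add_def' by (auto intro: additive_subgroup.a_closed ideal.axioms(1))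

lemma set_add_l: "ideal I R \<Longrightarrow> ideal J R \<Longrightarrow> I \<subseteq> I <+> J"
proof
  fix i assume "ideal I R" "ideal J R" "i \<in> I"
  then have "i \<oplus> \<zero> \<in> I <+> J" unfolding set_add_def'
    using additive_subgroup.zero_closed ideal.axioms(1) by fastforce
  then show "i \<in> I <+> J" using \<open>i \<in> I\<close> \<open>ideal I R\<close> ideal.Icarr by fastforce
qed

lemma set_add_r: "ideal I R \<Longrightarrow> ideal J R \<Longrightarrow> J \<subseteq> I <+> J"
proof
  fix i assume "ideal I R" "ideal J R" "i \<in> J"
  then have "\<zero> \<oplus> i \<in> I <+> J" unfolding set_add_def'
    using additive_subgroup.zero_closed ideal.axioms(1) by fastforce
  then show "i \<in> I <+> J" using \<open>i \<in> J\<close> \<open>ideal J R\<close> ideal.Icarr by fastforce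
qed

lemma sum_pow_gen:
  assumes I: "ideal I R" and J: "ideal J R" and A: "ideal A R"
    and hI: "ideal_power R I m \<subseteq> A" and hJ: "ideal_power R J n \<subseteq> A"
  shows "\<forall>p q. m + n \<le> p + q + k \<longrightarrow>
     ideal_prod R (ideal_prod R (ideal_power R I p) (ideal_power R J q)) (ideal_power R (I <+> J) k) \<subseteq> A"
proof (induct k)
  case 0
  show ?case
  proof (intro allI impI)
    fix p q assume pq: "m + n \<le> p + q + 0"
    let ?X = "ideal_prod R (ideal_power R I p) (ideal_power R J q)"
    have X: "ideal ?X R" by (intro ideal_prod_is_ideal ip_ideal I J)
    have "?X \<subseteq> A"
    proof (cases "m \<le> p")
      case True
      then show ?thesis using ideal_prod_inter[OF ip_ideal[OF I] ip_ideal[OF J], of p q]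
        ip_anti[OF I True] hI by blast
    next
      case False
      then have "n \<le> q" using pq by linarith
      then show ?thesis using ideal_prod_inter[OF ip_ideal[OF I] ip_ideal[OF J], of p q]
        ip_anti[OF J] hJ by blast
    qed
    then show "ideal_prod R ?X (ideal_power R (I <+> J) 0) \<subseteq> A"
      by (simp add: ip0 ideal_prod_one[OF X])
  qed
next
  case (Suc k)
  show ?case
  proof (intro allI impI)
    fix p q assume pq: "m + n \<le> p + q + Suc k"
    let ?K = "set_add R I J"
    have K: "ideal ?K R" by (rule add_ideals[OF I J])
    let ?Ip = "ideal_power R I p" and ?Jq = "ideal_power R J q" and ?Kk = "ideal_power R ?K k"
    have Ip: "ideal ?Ip R" and Jq: "ideal ?Jq R" and Kk: "ideal ?Kk R"
      using ip_ideal I J K by auto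
    let ?X = "ideal_prod R (ideal_prod R ?Ip ?Jq) ?Kk"
    have IJ: "ideal (ideal_prod R ?Ip ?Jq) R" by (rule ideal_prod_is_ideal[OF Ip Jq])
    have X: "ideal ?X R" by (rule ideal_prod_is_ideal[OF IJ Kk])
    have e1: "ideal_prod R (ideal_prod R ?Ip ?Jq) (ideal_power R ?K (Suc k)) = ideal_prod R ?X ?K"
      by (simp add: ipSuc ideal_prod_assoc[OF IJ Kk K])
    have e2: "ideal_prod R ?X ?K = ideal_prod R ?X I <+> ideal_prod R ?X J"
      by (rule ideal_prod_distr(1)[OF X I J])
    have e3: "ideal_prod R ?X I = ideal_prod R (ideal_prod R (ideal_power R I (Suc p)) ?Jq) ?Kk"
    proof -
      have "ideal_prod R ?X I = ideal_prod R I ?X" by (rule ideal_prod_commute[OF X I])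
      also have "\<dots> = ideal_prod R (ideal_prod R I (ideal_prod R ?Ip ?Jq)) ?Kk"
        by (rule ideal_prod_assoc[OF I IJ Kk, symmetric])
      also have "ideal_prod R I (ideal_prod R ?Ip ?Jq) = ideal_prod R (ideal_prod R I ?Ip) ?Jq"
        by (rule ideal_prod_assoc[OF I Ip Jq, symmetric])
      also have "ideal_prod R I ?Ip = ideal_power R I (Suc p)"
        by (simp add: ipSuc ideal_prod_commute[OF I Ip])
      finally show ?thesis .
    qed
    have e4: "ideal_prod R ?X J = ideal_prod R (ideal_prod R ?Ip (ideal_power R J (Suc q))) ?Kk"
    proof -
      have "ideal_prod R ?X J = ideal_prod R (ideal_prod R ?Ip ?Jq) (ideal_prod R ?Kk J)"
        by (rule ideal_prod_assoc[OF IJ Kk J])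
      also have "ideal_prod R ?Kk J = ideal_prod R J ?Kk" by (rule ideal_prod_commute[OF Kk J])
      also have "ideal_prod R (ideal_prod R ?Ip ?Jq) (ideal_prod R J ?Kk)
          = ideal_prod R (ideal_prod R (ideal_prod R ?Ip ?Jq) J) ?Kk"
        by (rule ideal_prod_assoc[OF IJ J Kk, symmetric])
      also have "ideal_prod R (ideal_prod R ?Ip ?Jq) J = ideal_prod R ?Ip (ideal_prod R ?Jq J)"
        by (rule ideal_prod_assoc[OF Ip Jq J])
      also have "ideal_prod R ?Jq J = ideal_power R J (Suc q)" by (simp add: ipSuc)
      finally show ?thesis .
    qed
    have s1: "ideal_prod R ?X I \<subseteq> A" unfolding e3 using Suc pq by simp
    have s2: "ideal_prod R ?X J \<subseteq> A" unfolding e4 using Suc pq by simp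
    show "ideal_prod R (ideal_prod R ?Ip ?Jq) (ideal_power R ?K (Suc k)) \<subseteq> A"
      unfolding e1 e2 by (rule set_add_sub[OF A s1 s2])
  qed
qed

lemma sum_pow:
  assumes I: "ideal I R" and J: "ideal J R" and A: "ideal A R"
    and hI: "ideal_power R I m \<subseteq> A" and hJ: "ideal_power R J n \<subseteq> A"
  shows "ideal_power R (I <+> J) (m + n) \<subseteq> A"
proof -
  have K: "ideal (I <+> J) R" by (rule add_ideals[OF I J])
  have "ideal_prod R (ideal_prod R (ideal_power R I 0) (ideal_power R J 0)) (ideal_power R (I <+> J) (m+n)) \<subseteq> A"
    using sum_pow_gen[OF I J A hI hJ, of "m+n"] by simp
  then show ?thesis by (simp add: ip0 ideal_prod_one[OF oneideal] one_prod[OF ip_ideal[OF K]])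
qed

lemma rad_mono: "I \<subseteq> J \<Longrightarrow> radical R I \<subseteq> radical R J"
  unfolding radical_def by blast

lemma rad_rad: "radical R (radical R A) \<subseteq> radical R A"
proof
  fix r assume "r \<in> radical R (radical R A)"
  then obtain n m where r: "r \<in> carrier R" "(r [^] (n::nat)) [^] (m::nat) \<in> A"
    unfolding radical_def by blast
  then have "r [^] (n * m) \<in> A" by (simp add: nat_pow_pow)
  with r show "r \<in> radical R A" unfolding radical_def by blast
qed

lemma rad_self: "A \<subseteq> carrier R \<Longrightarrow> A \<subseteq> radical R A"
  unfolding radical_def by (auto intro!: exI[of _ "1::nat"])

lemma PIdl_prod: "a \<in> carrier R \<Longrightarrow> b \<in> carrier R \<Longrightarrow> ideal_prod R (PIdl a) (PIdl b) \<subseteq> PIdl (a \<otimes> b)"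
proof
  fix s assume a: "a \<in> carrier R" and b: "b \<in> carrier R" and s: "s \<in> ideal_prod R (PIdl a) (PIdl b)"
  have id: "ideal (PIdl (a \<otimes> b)) R" using a b by (simp add: cgenideal_ideal)
  from s show "s \<in> PIdl (a \<otimes> b)"
  proof (induct s rule: ideal_prod.induct)
    case (prod i j)
    then obtain x y where xy: "x \<in> carrier R" "y \<in> carrier R" "i = x \<otimes> a" "j = y \<otimes> b"
      unfolding cgenideal_def by blast
    then have "i \<otimes> j = (x \<otimes> y) \<otimes> (a \<otimes> b)" using a b by (simp add: m_ac)
    then show ?case using xy a b unfolding cgenideal_def by blast
  next
    case (sum s1 s2)
    then show ?case using id by (simp add: additive_subgroup.a_closed ideal.axioms(1))
  qed
qed

lemma PIdl_pow: "a \<in> carrier R \<Longrightarrow> ideal_power R (PIdl a) k \<subseteq> PIdl (a [^] k)"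
proof (induct k)
  case 0
  show ?case
  proof
    fix x assume "x \<in> ideal_power R (PIdl a) 0"
    then have "x \<in> carrier R" by (simp add: ip0)
    then have "x = x \<otimes> a [^] (0::nat)" "x \<in> carrier R" by simp_all
    then show "x \<in> PIdl (a [^] (0::nat))" unfolding cgenideal_def by blast
  qed
next
  case (Suc k)
  have "ideal_power R (PIdl a) (Suc k) \<subseteq> ideal_prod R (PIdl (a [^] k)) (PIdl a)"
    using Suc by (simp add: ipSuc iprod_mono)
  also have "\<dots> \<subseteq> PIdl (a [^] Suc k)" using PIdl_prod[of "a [^] k" a] Suc by simp
  finally show ?case .
qed

lemma NIL:
  assumes A: "ideal A R" and fin: "finite S" and S: "S \<subseteq> carrier R" and rad: "S \<subseteq> radical R A"
  shows "\<exists>N. ideal_power R (Idl S) N \<subseteq> A"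
  using fin S rad
proof (induct S rule: finite_induct)
  case empty
  have h: "Idl {} \<subseteq> A" by (rule genideal_minimal[OF A]) (rule empty_subsetI)
  have e: "ideal_power R (Idl {}) 1 = Idl {}" by (rule ip_one[OF genideal_ideal]) (rule empty_subsetI)
  show ?case by (rule exI[of _ 1]) (simp only: e h)
next
  case (insert s S)
  have p1: "insert s S \<subseteq> carrier R" and p2: "insert s S \<subseteq> radical R A" by fact+
  have SS: "S \<subseteq> carrier R" "S \<subseteq> radical R A" using p1 p2 by (simp_all only: insert_subset)
  obtain N where N: "ideal_power R (Idl S) N \<subseteq> A" using insert.hyps(3)[OF SS] by (elim exE)
  have sc: "s \<in> carrier R" using p1 by (simp only: insert_subset)
  have "s \<in> radical R A" using p2 by (simp only: insert_subset)
  then obtain k :: nat where k: "s [^] k \<in> A" unfolding radical_def by (elim CollectE conjE exE)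
  have P: "ideal (PIdl s) R" using sc by (simp add: cgenideal_ideal)
  have G: "ideal (Idl S) R" using SS(1) by (rule genideal_ideal)
  have "ideal_power R (PIdl s) k \<subseteq> A"
    using PIdl_pow[OF sc, of k] cgenideal_minimal[OF A k] by (rule order_trans)
  then have H: "ideal_power R (set_add R (PIdl s) (Idl S)) (k + N) \<subseteq> A"
    by (rule sum_pow[OF P G A _ N])
  have "Idl (insert s S) \<subseteq> set_add R (PIdl s) (Idl S)"
  proof (rule genideal_minimal[OF add_ideals[OF P G]])
    have "s \<in> set_add R (PIdl s) (Idl S)" using set_add_l[OF P G] cgenideal_self[OF sc] by blast
    moreover have "S \<subseteq> set_add R (PIdl s) (Idl S)" using set_add_r[OF P G] genideal_self[OF SS(1)] by blast
    ultimately show "insert s S \<subseteq> set_add R (PIdl s) (Idl S)" by blast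
  qed
  then have "ideal_power R (Idl (insert s S)) (k + N) \<subseteq> ideal_power R (set_add R (PIdl s) (Idl S)) (k + N)" by (rule ip_mono)
  then have "ideal_power R (Idl (insert s S)) (k + N) \<subseteq> A" using H by (rule order_trans)
  then show ?case by (rule exI)
qed

lemma idem_rad:
  assumes A: "ideal A R" and e: "e \<in> carrier R" "e \<otimes> e = e" and r: "e \<in> radical R A"
  shows "e \<in> A"
proof -
  obtain k :: nat where k: "e [^] k \<in> A" using r unfolding radical_def by (elim CollectE conjE exE)
  have p: "e [^] Suc n = e" for n
    by (induct n) (use e in simp_all)
  show ?thesis
  proof (cases k)
    case 0
    then have "\<one> \<in> A" using k by simp
    then have "\<one> \<otimes> e \<in> A" using ideal.I_r_closed[OF A] e by blast
    then show ?thesis using e by simp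
  next
    case (Suc n)
    then show ?thesis using k p by simp
  qed
qed

lemma vnr_rad:
  assumes A: "ideal A R" and r: "r \<in> carrier R" and y: "y \<in> carrier R" and ry: "r = r \<otimes> r \<otimes> y"
    and rad: "r \<in> radical R A"
  shows "r \<in> A"
proof -
  obtain k :: nat where k: "r [^] k \<in> A" using rad unfolding radical_def by (elim CollectE conjE exE)
  have p: "r = r [^] Suc n \<otimes> y [^] n" for n
  proof (induct n)
    case 0
    then show ?case using r by simp
  next
    case (Suc n)
    have "r [^] Suc (Suc n) \<otimes> y [^] Suc n = (r [^] Suc n \<otimes> y [^] n) \<otimes> (r \<otimes> y)"
      using r y by (simp add: m_ac)
    also have "\<dots> = r \<otimes> (r \<otimes> y)" using Suc by simp
    also have "\<dots> = r" using ry r y by (simp add: m_assoc)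
    finally show ?case by simp
  qed
  show ?thesis
  proof (cases k)
    case 0
    then have "\<one> \<in> A" using k by simp
    then have "\<one> \<otimes> r \<in> A" using ideal.I_r_closed[OF A] r by blast
    then show ?thesis using r by simp
  next
    case (Suc n)
    then have "r [^] Suc n \<otimes> y [^] n \<in> A" using k ideal.I_r_closed[OF A] y by simp
    then show ?thesis using p by metis
  qed
qed

end

context module begin

lemma ann_ideal: assumes x: "x \<in> carrier M" shows "ideal (annihilator R M x) R"
proof (rule idealI)
  show "ring R" by (rule R.ring_axioms)
  show "subgroup (annihilator R M x) (add_monoid R)"
  proof (rule subgroup.intro)
    show "annihilator R M x \<subseteq> carrier (add_monoid R)" unfolding annihilator_def by auto
    show "\<And>a b. a \<in> annihilator R M x \<Longrightarrow> b \<in> annihilator R M x \<Longrightarrow> a \<otimes>\<^bsub>add_monoid R\<^esub> b \<in> annihilator R M x"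
      unfolding annihilator_def using x by (simp add: smult_l_distr)
    show "\<one>\<^bsub>add_monoid R\<^esub> \<in> annihilator R M x"
      unfolding annihilator_def using x by simp
    show "\<And>a. a \<in> annihilator R M x \<Longrightarrow> inv\<^bsub>add_monoid R\<^esub> a \<in> annihilator R M x"
      unfolding annihilator_def using x by (simp add: smult_l_minus flip: a_inv_def)
  qed
  show "\<And>a r. a \<in> annihilator R M x \<Longrightarrow> r \<in> carrier R \<Longrightarrow> r \<otimes> a \<in> annihilator R M x"
    unfolding annihilator_def using x by (simp add: smult_assoc1)
  show "\<And>a r. a \<in> annihilator R M x \<Longrightarrow> r \<in> carrier R \<Longrightarrow> a \<otimes> r \<in> annihilator R M x"
  proof -
    fix a r assume a: "a \<in> annihilator R M x" and r: "r \<in> carrier R"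
    then have ac: "a \<in> carrier R" and a0: "a \<odot>\<^bsub>M\<^esub> x = \<zero>\<^bsub>M\<^esub>" unfolding annihilator_def by auto
    have "(a \<otimes> r) \<odot>\<^bsub>M\<^esub> x = (r \<otimes> a) \<odot>\<^bsub>M\<^esub> x" using ac r by (simp add: m_comm)
    also have "\<dots> = \<zero>\<^bsub>M\<^esub>" using ac r x a0 by (simp add: smult_assoc1)
    finally show "a \<otimes> r \<in> annihilator R M x" unfolding annihilator_def using ac r by simp
  qed
qed

lemma Gamma_sub: assumes I: "ideal I R" shows "Gamma R I M \<subseteq> Gamma_bar R I M"
proof
  fix x assume "x \<in> Gamma R I M"
  then obtain n where x: "x \<in> carrier M" and n: "ideal_power R I n \<subseteq> annihilator R M x"
    unfolding Gamma_def by blast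
  have "I \<subseteq> radical R (annihilator R M x)"
  proof
    fix r assume r: "r \<in> I"
    then have "r [^] n \<in> annihilator R M x" using ip_mem[OF I r] n by blast
    then show "r \<in> radical R (annihilator R M x)" unfolding radical_def using r ideal.Icarr[OF I] by blast
  qed
  then show "x \<in> Gamma_bar R I M" using x unfolding Gamma_bar_def by blast
qed

lemma Gamma_eqI:
  assumes I: "ideal I R"
    and h: "\<And>x. x \<in> carrier M \<Longrightarrow> I \<subseteq> radical R (annihilator R M x) \<Longrightarrow> \<exists>n. ideal_power R I n \<subseteq> annihilator R M x"
  shows "Gamma R I M = Gamma_bar R I M"
proof
  show "Gamma R I M \<subseteq> Gamma_bar R I M" by (rule Gamma_sub[OF I])
  show "Gamma_bar R I M \<subseteq> Gamma R I M" unfolding Gamma_bar_def Gamma_def using h by blast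
qed

definition "smx I x = {y. \<exists>r\<in>I. y = r \<odot>\<^bsub>M\<^esub> x}"

lemma smx_sub: assumes I: "ideal I R" and x: "x \<in> carrier M" shows "submodule (smx I x) R M"
proof (rule submoduleI)
  have Ic: "\<And>r. r \<in> I \<Longrightarrow> r \<in> carrier R" using ideal.Icarr[OF I] by blast
  show "smx I x \<subseteq> carrier M" unfolding smx_def using x Ic by auto
  show "\<zero>\<^bsub>M\<^esub> \<in> smx I x" unfolding smx_def using x additive_subgroup.zero_closed[OF ideal.axioms(1)[OF I]]
    by (auto intro!: bexI[of _ \<zero>])
  show "\<ominus>\<^bsub>M\<^esub> a \<in> smx I x" if h: "a \<in> smx I x" for a
  proof -
    obtain r where r: "r \<in> I" "a = r \<odot>\<^bsub>M\<^esub> x" using h unfolding smx_def by blast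
    have "\<ominus>\<^bsub>M\<^esub> a = (\<ominus> r) \<odot>\<^bsub>M\<^esub> x" using r x Ic by (simp add: smult_l_minus)
    moreover have "\<ominus> r \<in> I" using r additive_subgroup.a_inv_closed[OF ideal.axioms(1)[OF I]] by blast
    ultimately show ?thesis unfolding smx_def by blast
  qed
  show "a \<oplus>\<^bsub>M\<^esub> b \<in> smx I x" if h: "a \<in> smx I x" "b \<in> smx I x" for a b
  proof -
    obtain r where r: "r \<in> I" "a = r \<odot>\<^bsub>M\<^esub> x" using h(1) unfolding smx_def by blast
    obtain s where s: "s \<in> I" "b = s \<odot>\<^bsub>M\<^esub> x" using h(2) unfolding smx_def by blast
    have "a \<oplus>\<^bsub>M\<^esub> b = (r \<oplus> s) \<odot>\<^bsub>M\<^esub> x" using r s x Ic by (simp add: smult_l_distr)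
    moreover have "r \<oplus> s \<in> I" using r s additive_subgroup.a_closed[OF ideal.axioms(1)[OF I]] by blast
    ultimately show ?thesis unfolding smx_def by blast
  qed
  show "a \<odot>\<^bsub>M\<^esub> b \<in> smx I x" if h: "a \<in> carrier R" "b \<in> smx I x" for a b
  proof -
    obtain r where r: "r \<in> I" "b = r \<odot>\<^bsub>M\<^esub> x" using h(2) unfolding smx_def by blast
    have "a \<odot>\<^bsub>M\<^esub> b = (a \<otimes> r) \<odot>\<^bsub>M\<^esub> x" using r x Ic h by (simp add: smult_assoc1)
    moreover have "a \<otimes> r \<in> I" using r h ideal.I_l_closed[OF I] by blast
    ultimately show ?thesis unfolding smx_def by blast
  qed
qed

lemma noeth_case:
  assumes noeth: "noetherian_module R M" and I: "ideal I R"
  shows "Gamma R I M = Gamma_bar R I M"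
proof (rule Gamma_eqI[OF I])
  fix x assume x: "x \<in> carrier M" and rad: "I \<subseteq> radical R (annihilator R M x)"
  let ?A = "annihilator R M x"
  have A: "ideal ?A R" by (rule ann_ideal[OF x])
  have Ic: "I \<subseteq> carrier R" using ideal.Icarr[OF I] by blast
  obtain S where S: "S \<subseteq> carrier M" "finite S" "smx I x = gen_submodule R M S"
    using noeth smx_sub[OF I x] unfolding noetherian_module_def by blast
  have SI: "S \<subseteq> smx I x" unfolding S(3) gen_submodule_def by blast
  have "\<forall>s\<in>S. \<exists>r. r \<in> I \<and> s = r \<odot>\<^bsub>M\<^esub> x" using SI unfolding smx_def by blast
  then obtain f where f: "\<And>s. s \<in> S \<Longrightarrow> f s \<in> I \<and> s = f s \<odot>\<^bsub>M\<^esub> x" by metis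
  let ?T = "f ` S"
  have TI: "?T \<subseteq> I" using f by blast
  have Tc: "?T \<subseteq> carrier R" using TI Ic by blast
  obtain N where N: "ideal_power R (Idl ?T) N \<subseteq> ?A"
    using NIL[OF A _ Tc] TI rad S(2) by blast
  have J: "ideal (Idl ?T) R" by (rule genideal_ideal[OF Tc])
  have "S \<subseteq> smx (Idl ?T) x"
  proof
    fix s assume s: "s \<in> S"
    then have "f s \<in> Idl ?T" using genideal_self[OF Tc] by blast
    then show "s \<in> smx (Idl ?T) x" using f[OF s] unfolding smx_def by blast
  qed
  then have sub: "smx I x \<subseteq> smx (Idl ?T) x" unfolding S(3) gen_submodule_def
    using smx_sub[OF J x] by blast
  have IJA: "I \<subseteq> set_add R (Idl ?T) ?A"
  proof
    fix r assume r: "r \<in> I"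
    then have "r \<odot>\<^bsub>M\<^esub> x \<in> smx (Idl ?T) x" using sub unfolding smx_def by blast
    then obtain j where j: "j \<in> Idl ?T" "r \<odot>\<^bsub>M\<^esub> x = j \<odot>\<^bsub>M\<^esub> x" unfolding smx_def by blast
    have rc: "r \<in> carrier R" using r Ic by blast
    have jc: "j \<in> carrier R" using j ideal.Icarr[OF J] by blast
    have "(r \<ominus> j) \<odot>\<^bsub>M\<^esub> x = r \<odot>\<^bsub>M\<^esub> x \<oplus>\<^bsub>M\<^esub> \<ominus>\<^bsub>M\<^esub> (j \<odot>\<^bsub>M\<^esub> x)"
      using rc jc x by (simp add: a_minus_def smult_l_distr smult_l_minus)
    also have "\<dots> = \<zero>\<^bsub>M\<^esub>" using j(2) jc x by (simp add: M.r_neg)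
    finally have "r \<ominus> j \<in> ?A" unfolding annihilator_def using rc jc by simp
    moreover have "r = j \<oplus> (r \<ominus> j)"
    proof -
      have "j \<oplus> (r \<ominus> j) = r \<oplus> (j \<oplus> \<ominus> j)" unfolding a_minus_def
        using R.a_lcomm[of j r "\<ominus> j"] rc jc by simp
      also have "\<dots> = r" using rc jc by (simp add: R.r_neg)
      finally show ?thesis by simp
    qed
    ultimately show "r \<in> set_add R (Idl ?T) ?A" using j(1) unfolding set_add_def' by blast
  qed
  have A1: "ideal_power R ?A 1 \<subseteq> ?A" using ip_one[OF A] by simp
  have "ideal_power R (set_add R (Idl ?T) ?A) (N + 1) \<subseteq> ?A"
    by (rule sum_pow[OF J A A N A1])
  moreover have "ideal_power R I (N + 1) \<subseteq> ideal_power R (set_add R (Idl ?T) ?A) (N + 1)"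
    by (rule ip_mono[OF IJA])
  ultimately show "\<exists>n. ideal_power R I n \<subseteq> ?A" by blast
qed

end


lemma part_c_aux:
  assumes R: "cring R" and a: "ideal a R" and b: "ideal b R" and ab: "a \<subseteq> b" and br: "b \<subseteq> radical R a"
    and M: "module R M" and hb: "Gamma R b M = Gamma_bar R b M"
  shows "Gamma R a M = Gamma_bar R a M"
proof -
  interpret module R M by fact
  have "Gamma_bar R a M \<subseteq> Gamma_bar R b M"
  proof
    fix x assume "x \<in> Gamma_bar R a M"
    then have x: "x \<in> carrier M" and ar: "a \<subseteq> radical R (annihilator R M x)" unfolding Gamma_bar_def by auto
    have "b \<subseteq> radical R (radical R (annihilator R M x))" using br rad_mono[OF ar] by blast
    then have "b \<subseteq> radical R (annihilator R M x)" using rad_rad by blast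
    then show "x \<in> Gamma_bar R b M" using x unfolding Gamma_bar_def by blast
  qed
  moreover have "Gamma R b M \<subseteq> Gamma R a M"
    unfolding Gamma_def using ip_mono[OF ab] by blast
  ultimately show ?thesis using Gamma_sub[OF a] hb by blast
qed

theorem corollary4p6:
  fixes R :: "('a, 'c) ring_scheme" and a :: "'a set"
  assumes "cring R" and "ideal a R"
  shows
   "((\<exists>n::nat. n \<ge> 1 \<and> finitely_generated_ideal R (ideal_power R a n))
        \<or> generated_by_idempotents R a
      \<longrightarrow> (\<forall>M :: ('a, 'm) module. module R M \<longrightarrow> Gamma R a M = Gamma_bar R a M))
    \<and> (noetherian_ring R \<or> von_neumann_regular R
      \<longrightarrow> (\<forall>M :: ('a, 'm) module. module R M \<longrightarrow> Gamma R a M = Gamma_bar R a M))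
    \<and> (\<forall>b. ideal b R \<and> a \<subseteq> b \<and> b \<subseteq> radical R a
        \<and> (\<forall>M :: ('a, 'm) module. module R M \<longrightarrow> Gamma R b M = Gamma_bar R b M)
      \<longrightarrow> (\<forall>M :: ('a, 'm) module. module R M \<longrightarrow> Gamma R a M = Gamma_bar R a M))
    \<and> (\<forall>M :: ('a, 'm) module. noetherian_module R M \<longrightarrow> Gamma R a M = Gamma_bar R a M)"
proof -
  interpret cring R by fact
  have I: "ideal a R" by fact
  have Ic: "a \<subseteq> carrier R" using ideal.Icarr[OF I] by blast
  have A1: "\<forall>M :: ('a, 'm) module. module R M \<longrightarrow> Gamma R a M = Gamma_bar R a M"
    if fg: "\<exists>n::nat. n \<ge> 1 \<and> finitely_generated_ideal R (ideal_power R a n)"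
  proof (intro allI impI)
    fix M :: "('a, 'm) module" assume "module R M"
    then interpret module R M .
    obtain n S where n: "n \<ge> 1" and S: "S \<subseteq> carrier R" "finite S" "ideal_power R a n = Idl\<^bsub>R\<^esub> S"
      using fg unfolding finitely_generated_ideal_def by blast
    show "Gamma R a M = Gamma_bar R a M"
    proof (rule Gamma_eqI[OF I])
      fix x assume x: "x \<in> carrier M" and rad: "a \<subseteq> radical R (annihilator R M x)"
      have "S \<subseteq> ideal_power R a n" using S genideal_self by auto
      also have "\<dots> \<subseteq> ideal_power R a 1" by (rule ip_anti[OF I n])
      also have "\<dots> = a" by (rule ip_one[OF I])
      finally have "S \<subseteq> radical R (annihilator R M x)" using rad by blast
      then obtain N where "ideal_power R (Idl\<^bsub>R\<^esub> S) N \<subseteq> annihilator R M x"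
        using NIL[OF ann_ideal[OF x] S(2) S(1)] by blast
      then have "ideal_power R a (n * N) \<subseteq> annihilator R M x"
        using S(3) ip_pow[OF I, of n N] by simp
      then show "\<exists>n. ideal_power R a n \<subseteq> annihilator R M x" by blast
    qed
  qed
  have A2: "\<forall>M :: ('a, 'm) module. module R M \<longrightarrow> Gamma R a M = Gamma_bar R a M"
    if gi: "generated_by_idempotents R a"
  proof (intro allI impI)
    fix M :: "('a, 'm) module" assume "module R M"
    then interpret module R M .
    obtain E where E: "E \<subseteq> carrier R" "\<forall>e\<in>E. e \<otimes>\<^bsub>R\<^esub> e = e" "a = Idl\<^bsub>R\<^esub> E"
      using gi unfolding generated_by_idempotents_def by blast
    show "Gamma R a M = Gamma_bar R a M"
    proof (rule Gamma_eqI[OF I])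
      fix x assume x: "x \<in> carrier M" and rad: "a \<subseteq> radical R (annihilator R M x)"
      have "E \<subseteq> annihilator R M x"
      proof
        fix e assume e: "e \<in> E"
        have "e \<in> a" using E genideal_self e by auto
        then show "e \<in> annihilator R M x"
          using idem_rad[OF ann_ideal[OF x]] E e rad by blast
      qed
      then have "a \<subseteq> annihilator R M x" using E(3) genideal_minimal[OF ann_ideal[OF x]] by simp
      then show "\<exists>n. ideal_power R a n \<subseteq> annihilator R M x" using ip_one[OF I] by (metis)
    qed
  qed
  have B: "\<forall>M :: ('a, 'm) module. module R M \<longrightarrow> Gamma R a M = Gamma_bar R a M"
    if h: "noetherian_ring R \<or> von_neumann_regular R"
  proof (cases "noetherian_ring R")
    case True
    then obtain S where "S \<subseteq> carrier R" "finite S" "a = Idl\<^bsub>R\<^esub> S"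
      using noetherian_ring.finetely_gen[OF True I] by blast
    then have "finitely_generated_ideal R (ideal_power R a 1)"
      unfolding finitely_generated_ideal_def using ip_one[OF I] by auto
    then show ?thesis using A1 by blast
  next
    case False
    then have vnr: "von_neumann_regular R" using h by blast
    show ?thesis
    proof (intro allI impI)
      fix M :: "('a, 'm) module" assume "module R M"
      then interpret module R M .
      show "Gamma R a M = Gamma_bar R a M"
      proof (rule Gamma_eqI[OF I])
        fix x assume x: "x \<in> carrier M" and rad: "a \<subseteq> radical R (annihilator R M x)"
        have "a \<subseteq> annihilator R M x"
        proof
          fix r assume r: "r \<in> a"
          then have rc: "r \<in> carrier R" using Ic by blast
          then obtain y where y: "y \<in> carrier R" "r = r \<otimes>\<^bsub>R\<^esub> r \<otimes>\<^bsub>R\<^esub> y"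
            using vnr unfolding von_neumann_regular_def by blast
          show "r \<in> annihilator R M x"
            using vnr_rad[OF ann_ideal[OF x] rc y(1) y(2)] r rad by blast
        qed
        then show "\<exists>n. ideal_power R a n \<subseteq> annihilator R M x" using ip_one[OF I] by (metis)
      qed
    qed
  qed
  have C: "\<forall>b. ideal b R \<and> a \<subseteq> b \<and> b \<subseteq> radical R a
        \<and> (\<forall>M :: ('a, 'm) module. module R M \<longrightarrow> Gamma R b M = Gamma_bar R b M)
      \<longrightarrow> (\<forall>M :: ('a, 'm) module. module R M \<longrightarrow> Gamma R a M = Gamma_bar R a M)"
    using part_c_aux[OF \<open>cring R\<close> I] by blast
  have D: "\<forall>M :: ('a, 'm) module. noetherian_module R M \<longrightarrow> Gamma R a M = Gamma_bar R a M"
  proof (intro allI impI)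
    fix M :: "('a, 'm) module" assume nm: "noetherian_module R M"
    then have "module R M" unfolding noetherian_module_def by blast
    then interpret module R M .
    show "Gamma R a M = Gamma_bar R a M" by (rule noeth_case[OF nm I])
  qed
  show ?thesis using A1 A2 B C D by blast
qed

end
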